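(* Given an episodic MDP and a general preference $M$, construct the two-player zero-sum Markov game consisting of two independent copies of the MDP, where player $i\in\{1,2\}$ controls the $i$-th copy, with payoff $r(\tau,\tau')=M[\tau,\tau']$ for the pair of trajectories $(\tau,\tau')$ of the two copies (player 1 maximizes, player 2 minimizes). If $(\mu^\star,\nu^\star)\in\Pi_1\times\Pi_2$ is a restricted Nash equilibrium of this game, i.e. $\mu^\star\in\arg\max_{\mu\in\Pi_1}\mathbb{E}_{\tau\sim\mu,\tau'\sim\nu^\star}[M[\tau,\tau']]$ and $\nu^\star\in\arg\min_{\nu\in\Pi_2}\mathbb{E}_{\tau\sim\mu^\star,\tau'\sim\nu}[M[\tau,\tau']]$, then both $\mu^\star$ and $\nu^\star$ are von Neumann winners of the original problem.
   Context: Episodic MDP $(H,\mathcal{S},\mathcal{A},\mathbb{P})$; trajectories $\tau\in(\mathcal{S}\times\mathcal{A})^H$; policies are general (may depend on the whole history, randomized). General preference: $M[\tau,\tau']=\Pr[\tau\succ\tau']\in[0,1]$, with $M[\tau,\tau']+M[\tau',\tau]=1$, so the game below is constant-sum. $\Pi_i$ is the set of policies of player $i$ that map the player's own partial trajectory $(s^{(i)}_1,a^{(i)}_1,\dots,s^{(i)}_h)$ in its copy to a distribution over actions; it coincides with the set of all general policies of the original MDP. A policy $\pi^\star$ is a von Neumann winner if $(\pi^\star,\pi^\star)$ is a symmetric Nash equilibrium of the constant-sum game $\max_\pi\min_{\pi'}\mathbb{E}_{\tau\sim\pi,\tau'\sim\pi'}M[\tau,\tau']$. *)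

theory Defs
  imports "HOL-Probability.Probability"
begin

text \<open>Episodic MDP: initial state distribution init, time-indexed transition kernel
  P h s a (distribution of the state at step h+1 given state s and action a at step h),
  horizon H.
  A general (history-dependent, randomized) policy maps the partial trajectory
  (s_1,a_1,...,s_{h-1},a_{h-1}) together with the current state s_h to a distribution
  over actions.\<close>

type_synonym ('s,'a) traj = "('s \<times> 'a) list"
type_synonym ('s,'a) policy = "('s \<times> 'a) list \<Rightarrow> 's \<Rightarrow> 'a pmf"

fun traj_dist :: "'s pmf \<Rightarrow> (nat \<Rightarrow> 's \<Rightarrow> 'a \<Rightarrow> 's pmf) \<Rightarrow> ('s,'a) policy \<Rightarrow> nat
    \<Rightarrow> ('s,'a) traj pmf" where
  "traj_dist init P pol 0 = return_pmf []"
| "traj_dist init P pol (Suc n) =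
     bind_pmf (traj_dist init P pol n) (\<lambda>hist.
       bind_pmf (if hist = [] then init
                 else P (length hist) (fst (last hist)) (snd (last hist))) (\<lambda>s.
         map_pmf (\<lambda>a. hist @ [(s, a)]) (pol hist s)))"

definition pref_value :: "'s pmf \<Rightarrow> (nat \<Rightarrow> 's \<Rightarrow> 'a \<Rightarrow> 's pmf) \<Rightarrow> nat
    \<Rightarrow> (('s,'a) traj \<Rightarrow> ('s,'a) traj \<Rightarrow> real) \<Rightarrow> ('s,'a) policy \<Rightarrow> ('s,'a) policy \<Rightarrow> real" where
  "pref_value init P H M p q =
     measure_pmf.expectation (pair_pmf (traj_dist init P p H) (traj_dist init P q H))
       (\<lambda>(t, t'). M t t')"

definition von_neumann_winner :: "'s pmf \<Rightarrow> (nat \<Rightarrow> 's \<Rightarrow> 'a \<Rightarrow> 's pmf) \<Rightarrow> nat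
    \<Rightarrow> (('s,'a) traj \<Rightarrow> ('s,'a) traj \<Rightarrow> real) \<Rightarrow> ('s,'a) policy \<Rightarrow> bool" where
  "von_neumann_winner init P H M p \<longleftrightarrow>
     (\<forall>q. pref_value init P H M q p \<le> pref_value init P H M p p) \<and>
     (\<forall>q. pref_value init P H M p p \<le> pref_value init P H M p q)"

end

theory Submission
  imports Defs
begin

lemma traj_len: "t \<in> set_pmf (traj_dist init P pol n) \<Longrightarrow> length t = n"
proof (induction n arbitrary: t)
  case (Suc n)
  from Suc.prems obtain h s a where h: "h \<in> set_pmf (traj_dist init P pol n)" and t: "t = h @ [(s, a)]"
    by (auto split: if_splits)
  then show ?case using Suc.IH[OF h] by simp
qed simp

lemma pv_sum:
  assumes M_range: "\<And>t t'. length t = H \<Longrightarrow> length t' = H \<Longrightarrow> 0 \<le> M t t' \<and> M t t' \<le> 1"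
    and M_antisym: "\<And>t t'. length t = H \<Longrightarrow> length t' = H \<Longrightarrow> M t t' + M t' t = 1"
  shows "pref_value init P H M p q + pref_value init P H M q p = 1"
proof -
  let ?A = "traj_dist init P p H" and ?B = "traj_dist init P q H"
  have sw: "pair_pmf ?B ?A = map_pmf (\<lambda>(x, y). (y, x)) (pair_pmf ?A ?B)"
    by (rule pair_commute_pmf)
  have swp: "pref_value init P H M q p = measure_pmf.expectation (pair_pmf ?A ?B) (\<lambda>(t, t'). M t' t)"
    unfolding pref_value_def sw by (simp add: case_prod_unfold)
  have bnd: "\<And>t t'. length t = H \<Longrightarrow> length t' = H \<Longrightarrow> \<bar>M t t'\<bar> \<le> 1"
    using M_range by (smt (verit))
  moreover have i1: "integrable (measure_pmf (pair_pmf ?A ?B)) (\<lambda>(t, t'). M t t')"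
    by (rule measure_pmf.integrable_const_bound[where B=1])
       (auto intro!: AE_pmfI bnd dest!: traj_len)
  moreover have i2: "integrable (measure_pmf (pair_pmf ?A ?B)) (\<lambda>(t, t'). M t' t)"
    by (rule measure_pmf.integrable_const_bound[where B=1])
       (auto intro!: AE_pmfI bnd dest!: traj_len)
  ultimately have "pref_value init P H M p q + pref_value init P H M q p
      = measure_pmf.expectation (pair_pmf ?A ?B) (\<lambda>x. (\<lambda>(t, t'). M t t') x + (\<lambda>(t, t'). M t' t) x)"
    unfolding swp unfolding pref_value_def by (simp add: Bochner_Integration.integral_add)
  also have "\<dots> = measure_pmf.expectation (pair_pmf ?A ?B) (\<lambda>x. 1)"
    by (rule integral_cong_AE) (auto intro!: AE_pmfI M_antisym dest!: traj_len)
  also have "\<dots> = 1" by simp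
  finally show ?thesis .
qed

theorem proposition4:
  fixes init :: "'s pmf" and P :: "nat \<Rightarrow> 's \<Rightarrow> 'a \<Rightarrow> 's pmf" and H :: nat
    and M :: "('s,'a) traj \<Rightarrow> ('s,'a) traj \<Rightarrow> real"
    and mu nu :: "('s,'a) policy"
  assumes M_range: "\<And>t t'. length t = H \<Longrightarrow> length t' = H \<Longrightarrow> 0 \<le> M t t' \<and> M t t' \<le> 1"
    and M_antisym: "\<And>t t'. length t = H \<Longrightarrow> length t' = H \<Longrightarrow> M t t' + M t' t = 1"
    and mu_best: "\<forall>mu'. pref_value init P H M mu' nu \<le> pref_value init P H M mu nu"
    and nu_best: "\<forall>nu'. pref_value init P H M mu nu \<le> pref_value init P H M mu nu'"
  shows "von_neumann_winner init P H M mu \<and> von_neumann_winner init P H M nu"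
proof -
  let ?V = "pref_value init P H M"
  have S: "\<And>p q. ?V p q + ?V q p = 1" using pv_sum[of H M] M_range M_antisym by blast
  have h: "?V p p = 1/2" for p using S[of p p] by linarith
  have v: "?V mu nu = 1/2" 
  proof -
    have "?V mu nu \<le> ?V mu mu" using nu_best by blast
    moreover have "?V nu nu \<le> ?V mu nu" using mu_best by blast
    ultimately show ?thesis using h[of mu] h[of nu] by linarith
  qed
  have a: "\<And>q. ?V q mu = 1 - ?V mu q" using S by (metis eq_diff_eq add.commute)
  have b: "\<And>q. ?V nu q = 1 - ?V q nu" using S by (metis eq_diff_eq)
  show ?thesis unfolding von_neumann_winner_def h
  proof (intro conjI allI)
    fix q
    show "?V mu q \<ge> 1/2" using nu_best v by simp
    then show "?V q mu \<le> 1/2" using a[of q] by linarith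
    show "?V q nu \<le> 1/2" using mu_best v by simp
    then show "?V nu q \<ge> 1/2" using b[of q] by linarith
  qed
qed

end
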